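(* Let $W=XYZ+XZY$ and $\mathbb{M}^W_{3,2}(\lambda)=\{(A_1,A_2,A_3)\in M_2(\mathbb{C})^3: Tr(W(A_1,A_2,A_3))=\lambda\}$. Then \[[\mathbb{M}^W_{3,2}(1)]=\mathbb{L}^{11}-\mathbb{L}^8-3\mathbb{L}^7+2\mathbb{L}^6+2\mathbb{L}^5-\mathbb{L}^4,\qquad [\mathbb{M}^W_{3,2}(0)]=\mathbb{L}^{11}+\mathbb{L}^9+2\mathbb{L}^8-5\mathbb{L}^7+3\mathbb{L}^5-\mathbb{L}^4,\] and consequently $[\mathbb{M}^W_{3,2}(0)]-[\mathbb{M}^W_{3,2}(1)]=\mathbb{L}^4(\mathbb{L}^5+3\mathbb{L}^4-2\mathbb{L}^3-2\mathbb{L}^2+\mathbb{L})$.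
   Context: Classes are motives in the Grothendieck ring of complex varieties, $\mathbb{L}=[\mathbb{A}^1]$. *)

theory Defs
  imports Complex_Main
begin

type_synonym pt = "nat \<Rightarrow> complex"

definition aff :: "nat \<Rightarrow> pt set" where
  "aff n = {x. \<forall>i\<ge>n. x i = 0}"

inductive_set polyfun :: "nat \<Rightarrow> (pt \<Rightarrow> complex) set" for n :: nat where
  pf_const: "(\<lambda>x. c) \<in> polyfun n"
| pf_coord: "i < n \<Longrightarrow> (\<lambda>x. x i) \<in> polyfun n"
| pf_add: "f \<in> polyfun n \<Longrightarrow> g \<in> polyfun n \<Longrightarrow> (\<lambda>x. f x + g x) \<in> polyfun n"
| pf_mult: "f \<in> polyfun n \<Longrightarrow> g \<in> polyfun n \<Longrightarrow> (\<lambda>x. f x * g x) \<in> polyfun n"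

definition zclosed :: "nat \<Rightarrow> pt set \<Rightarrow> bool" where
  "zclosed n C \<longleftrightarrow> (\<exists>F. finite F \<and> F \<subseteq> polyfun n \<and> C = {x \<in> aff n. \<forall>f\<in>F. f x = 0})"

text \<open>Locally closed subsets = quasi-affine varieties (reduced).\<close>
definition locclosed :: "nat \<Rightarrow> pt set \<Rightarrow> bool" where
  "locclosed n X \<longleftrightarrow> (\<exists>C D. zclosed n C \<and> zclosed n D \<and> X = C - D)"

definition morphism :: "nat \<Rightarrow> pt set \<Rightarrow> nat \<Rightarrow> pt set \<Rightarrow> (pt \<Rightarrow> pt) \<Rightarrow> bool" where
  "morphism n X m Y f \<longleftrightarrow> (\<forall>x\<in>X. f x \<in> Y) \<and>
     (\<forall>p\<in>X. \<forall>j<m. \<exists>g h D. g \<in> polyfun n \<and> h \<in> polyfun n \<and> zclosed n D \<and> p \<notin> D \<and>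
        (\<forall>x\<in>X - D. h x \<noteq> 0 \<and> f x j = g x / h x))"

definition isomorphic :: "nat \<Rightarrow> pt set \<Rightarrow> nat \<Rightarrow> pt set \<Rightarrow> bool" where
  "isomorphic n X m Y \<longleftrightarrow> (\<exists>f g. morphism n X m Y f \<and> morphism m Y n X g \<and>
      (\<forall>x\<in>X. g (f x) = x) \<and> (\<forall>y\<in>Y. f (g y) = y))"

text \<open>Free abelian group on (quasi-affine) varieties: finitely supported integer functions.\<close>
type_synonym fgrp = "(nat \<times> pt set) \<Rightarrow> int"

definition gen :: "nat \<Rightarrow> pt set \<Rightarrow> fgrp" where
  "gen n X = (\<lambda>v. if v = (n, X) then 1 else 0)"

inductive_set rels :: "fgrp set" where
  rel_zero: "(\<lambda>v. 0) \<in> rels"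
| rel_iso: "locclosed n X \<Longrightarrow> locclosed m Y \<Longrightarrow> isomorphic n X m Y \<Longrightarrow>
      (\<lambda>v. gen n X v - gen m Y v) \<in> rels"
| rel_cut: "locclosed n X \<Longrightarrow> zclosed n C \<Longrightarrow>
      (\<lambda>v. gen n X v - gen n (X \<inter> C) v - gen n (X - C) v) \<in> rels"
| rel_add: "a \<in> rels \<Longrightarrow> b \<in> rels \<Longrightarrow> (\<lambda>v. a v + b v) \<in> rels"
| rel_neg: "a \<in> rels \<Longrightarrow> (\<lambda>v. - a v) \<in> rels"

definition K0_eq :: "fgrp \<Rightarrow> fgrp \<Rightarrow> bool" where
  "K0_eq a b \<longleftrightarrow> (\<lambda>v. a v - b v) \<in> rels"

definition Lpow :: "nat \<Rightarrow> fgrp" where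
  "Lpow k = gen k (aff k)"

definition Lpoly :: "(nat \<times> int) list \<Rightarrow> fgrp" where
  "Lpoly cs = (\<lambda>v. (\<Sum>(k, c)\<leftarrow>cs. c * Lpow k v))"

definition mmul :: "(nat \<Rightarrow> nat \<Rightarrow> complex) \<Rightarrow> (nat \<Rightarrow> nat \<Rightarrow> complex) \<Rightarrow> nat \<Rightarrow> nat \<Rightarrow> complex" where
  "mmul A B = (\<lambda>i j. \<Sum>k<2. A i k * B k j)"

definition mtr :: "(nat \<Rightarrow> nat \<Rightarrow> complex) \<Rightarrow> complex" where
  "mtr A = (\<Sum>i<2. A i i)"

definition mat_of :: "nat \<Rightarrow> pt \<Rightarrow> nat \<Rightarrow> nat \<Rightarrow> complex" where
  "mat_of k x = (\<lambda>i j. x (4 * k + 2 * i + j))"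

definition trW :: "pt \<Rightarrow> complex" where
  "trW x = mtr (mmul (mmul (mat_of 0 x) (mat_of 1 x)) (mat_of 2 x))
         + mtr (mmul (mmul (mat_of 0 x) (mat_of 2 x)) (mat_of 1 x))"

definition MW :: "complex \<Rightarrow> pt set" where
  "MW lam = {x \<in> aff 12. trW x = lam}"

end

theory Submission
  imports Defs "HOL-Computational_Algebra.Polynomial"
begin


lemma pf_diff: "f \<in> polyfun n \<Longrightarrow> g \<in> polyfun n \<Longrightarrow> (\<lambda>x. f x - g x) \<in> polyfun n"
proof -
  assume a: "f \<in> polyfun n" "g \<in> polyfun n"
  have "(\<lambda>x. (-1) * g x) \<in> polyfun n" using a by (intro pf_mult pf_const)
  hence "(\<lambda>x. f x + (-1) * g x) \<in> polyfun n" using a by (intro pf_add)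
  thus ?thesis by simp
qed

lemma pf_cmult: "f \<in> polyfun n \<Longrightarrow> (\<lambda>x. c * f x) \<in> polyfun n"
  by (intro pf_mult pf_const)

lemma pf_divc: "f \<in> polyfun n \<Longrightarrow> (\<lambda>x. f x / c) \<in> polyfun n"
proof -
  assume "f \<in> polyfun n"
  hence "(\<lambda>x. f x * (1/c)) \<in> polyfun n" by (intro pf_mult pf_const)
  thus ?thesis by simp
qed

lemma pf_neg: "f \<in> polyfun n \<Longrightarrow> (\<lambda>x. - f x) \<in> polyfun n"
  using pf_cmult[of f n "-1"] by simp

lemma pf_power: "f \<in> polyfun n \<Longrightarrow> (\<lambda>x. f x ^ k) \<in> polyfun n"
  by (induction k) (auto intro: pf_const pf_mult)

lemma pf_zero: "(\<lambda>x. 0) \<in> polyfun n" by (rule pf_const)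

lemma pf_dep: "f \<in> polyfun n \<Longrightarrow> (\<forall>i<n. x i = y i) \<Longrightarrow> f x = f y"
  by (induction rule: polyfun.induct) auto

definition del :: "nat \<Rightarrow> pt \<Rightarrow> pt" where
  "del k x = (\<lambda>i. if i < k then x i else x (Suc i))"

definition ins :: "nat \<Rightarrow> complex \<Rightarrow> pt \<Rightarrow> pt" where
  "ins k a y = (\<lambda>i. if i < k then y i else if i = k then a else y (i - 1))"

lemma pf_del: "f \<in> polyfun n \<Longrightarrow> (\<lambda>x. f (del k x)) \<in> polyfun (Suc n)"
proof (induction rule: polyfun.induct)
  case (pf_const c) then show ?case by (rule polyfun.pf_const)
next
  case (pf_coord i)
  show ?case
  proof (cases "i < k")
    case True
    then have "(\<lambda>x. del k x i) = (\<lambda>x. x i)" by (auto simp: del_def)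
    then show ?thesis using pf_coord by (auto intro: polyfun.pf_coord)
  next
    case False
    then have "(\<lambda>x. del k x i) = (\<lambda>x. x (Suc i))" by (auto simp: del_def)
    then show ?thesis using pf_coord by (auto intro: polyfun.pf_coord)
  qed
next
  case (pf_add f g) then show ?case by (auto intro: polyfun.pf_add)
next
  case (pf_mult f g) then show ?case by (auto intro: polyfun.pf_mult)
qed

lemma del_aff: "k \<le> n \<Longrightarrow> x \<in> aff (Suc n) \<Longrightarrow> del k x \<in> aff n"
  by (auto simp: aff_def del_def)

lemma ins_aff: "k \<le> n \<Longrightarrow> y \<in> aff n \<Longrightarrow> ins k a y \<in> aff (Suc n)"
  by (auto simp: aff_def ins_def)

lemma del_ins[simp]: "del k (ins k a y) = y"
  by (auto simp: del_def ins_def)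

lemma ins_del: "ins k (x k) (del k x) = x"
proof
  fix i show "ins k (x k) (del k x) i = x i"
    by (cases "i < k"; cases "i = k") (auto simp: del_def ins_def)
qed

lemma ins_k[simp]: "ins k a y k = a" by (simp add: ins_def)

lemma zclosed_eq: "f \<in> polyfun n \<Longrightarrow> zclosed n {x \<in> aff n. f x = 0}"
  unfolding zclosed_def by (rule exI[of _ "{f}"]) auto

lemma zclosed_empty: "zclosed n {}"
  unfolding zclosed_def by (rule exI[of _ "{\<lambda>x. 1}"]) (auto intro: pf_const)

lemma zclosed_aff: "zclosed n (aff n)"
  unfolding zclosed_def by (rule exI[of _ "{}"]) auto

lemma zclosed_Int: "zclosed n A \<Longrightarrow> zclosed n B \<Longrightarrow> zclosed n (A \<inter> B)"
  unfolding zclosed_def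
proof (elim exE conjE)
  fix F G assume "finite F" "F \<subseteq> polyfun n" "A = {x \<in> aff n. \<forall>f\<in>F. f x = 0}"
    "finite G" "G \<subseteq> polyfun n" "B = {x \<in> aff n. \<forall>f\<in>G. f x = 0}"
  then show "\<exists>H. finite H \<and> H \<subseteq> polyfun n \<and> A \<inter> B = {x \<in> aff n. \<forall>f\<in>H. f x = 0}"
    by (intro exI[of _ "F \<union> G"]) auto
qed

lemma zclosed_Un: "zclosed n A \<Longrightarrow> zclosed n B \<Longrightarrow> zclosed n (A \<union> B)"
  unfolding zclosed_def
proof (elim exE conjE)
  fix F G assume a: "finite F" "F \<subseteq> polyfun n" "A = {x \<in> aff n. \<forall>f\<in>F. f x = 0}"
    "finite G" "G \<subseteq> polyfun n" "B = {x \<in> aff n. \<forall>f\<in>G. f x = 0}"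
  let ?H = "(\<lambda>(f,g) x. f x * g x) ` (F \<times> G)"
  have "finite ?H" using a by auto
  moreover have "?H \<subseteq> polyfun n" using a by (auto intro: pf_mult)
  moreover have "A \<union> B = {x \<in> aff n. \<forall>h\<in>?H. h x = 0}"
    using a by auto
  ultimately show "\<exists>H. finite H \<and> H \<subseteq> polyfun n \<and> A \<union> B = {x \<in> aff n. \<forall>f\<in>H. f x = 0}"
    by blast
qed

lemma zclosed_del: assumes kn: "k \<le> n" shows "zclosed n A \<Longrightarrow> zclosed (Suc n) {x \<in> aff (Suc n). del k x \<in> A}"
  unfolding zclosed_def
proof (elim exE conjE)
  fix F assume a: "finite F" "F \<subseteq> polyfun n" "A = {x \<in> aff n. \<forall>f\<in>F. f x = 0}"
  let ?H = "(\<lambda>f x. f (del k x)) ` F"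
  have "?H \<subseteq> polyfun (Suc n)" using a by (auto intro: pf_del)
  moreover have "{x \<in> aff (Suc n). del k x \<in> A} = {x \<in> aff (Suc n). \<forall>h\<in>?H. h x = 0}"
    using a kn by (auto simp: del_aff)
  ultimately show "\<exists>H. finite H \<and> H \<subseteq> polyfun (Suc n) \<and> {x \<in> aff (Suc n). del k x \<in> A} = {x \<in> aff (Suc n). \<forall>f\<in>H. f x = 0}"
    using a by blast
qed

lemma zclosed_sub: "zclosed n A \<Longrightarrow> A \<subseteq> aff n"
  unfolding zclosed_def by auto

definition S :: "nat \<Rightarrow> (pt \<Rightarrow> bool) \<Rightarrow> pt set" where
  "S n P = {x \<in> aff n. P x}"

definition lc :: "nat \<Rightarrow> (pt \<Rightarrow> bool) \<Rightarrow> bool" where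
  "lc n P \<longleftrightarrow> locclosed n (S n P)"

lemma lc_eq: "f \<in> polyfun n \<Longrightarrow> lc n (\<lambda>x. f x = 0)"
  unfolding lc_def locclosed_def S_def
  by (rule exI[of _ "{x \<in> aff n. f x = 0}"], rule exI[of _ "{}"])
     (auto intro: zclosed_eq zclosed_empty)

lemma lc_neq: "f \<in> polyfun n \<Longrightarrow> lc n (\<lambda>x. f x \<noteq> 0)"
  unfolding lc_def locclosed_def S_def
  by (rule exI[of _ "aff n"], rule exI[of _ "{x \<in> aff n. f x = 0}"])
     (auto intro: zclosed_eq zclosed_aff)

lemma lc_True: "lc n (\<lambda>x. True)"
  unfolding lc_def locclosed_def S_def
  by (rule exI[of _ "aff n"], rule exI[of _ "{}"]) (auto intro: zclosed_empty zclosed_aff)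

lemma lc_conj: "lc n P \<Longrightarrow> lc n Q \<Longrightarrow> lc n (\<lambda>x. P x \<and> Q x)"
  unfolding lc_def locclosed_def
proof (elim exE conjE)
  fix C1 D1 C2 D2 assume a: "zclosed n C1" "zclosed n D1" "S n P = C1 - D1"
    "zclosed n C2" "zclosed n D2" "S n Q = C2 - D2"
  have "S n (\<lambda>x. P x \<and> Q x) = (C1 \<inter> C2) - (D1 \<union> D2)"
    using a unfolding S_def by blast
  then show "\<exists>C D. zclosed n C \<and> zclosed n D \<and> S n (\<lambda>x. P x \<and> Q x) = C - D"
    using a by (blast intro: zclosed_Int zclosed_Un)
qed

lemma lc_cong: "lc n Q \<Longrightarrow> (\<And>x. x \<in> aff n \<Longrightarrow> P x \<longleftrightarrow> Q x) \<Longrightarrow> lc n P"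
proof -
  assume "lc n Q" "\<And>x. x \<in> aff n \<Longrightarrow> P x \<longleftrightarrow> Q x"
  then have "S n P = S n Q" by (auto simp: S_def)
  then show ?thesis using \<open>lc n Q\<close> by (simp add: lc_def)
qed

lemma lc_del: assumes kn: "k \<le> n" shows "lc n P \<Longrightarrow> lc (Suc n) (\<lambda>x. P (del k x))"
  unfolding lc_def locclosed_def
proof (elim exE conjE)
  fix C D assume a: "zclosed n C" "zclosed n D" "S n P = C - D"
  have "S (Suc n) (\<lambda>x. P (del k x)) = {x \<in> aff (Suc n). del k x \<in> C} - {x \<in> aff (Suc n). del k x \<in> D}"
    using a del_aff[OF kn] unfolding S_def by blast
  then show "\<exists>C D. zclosed (Suc n) C \<and> zclosed (Suc n) D \<and> S (Suc n) (\<lambda>x. P (del k x)) = C - D"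
    using a kn by (blast intro: zclosed_del)
qed

lemma lc_allzero: "Z \<subseteq> {..<n} \<Longrightarrow> lc n (\<lambda>x. \<forall>i\<in>Z. x i = 0)"
  unfolding lc_def locclosed_def S_def
proof -
  assume z: "Z \<subseteq> {..<n}"
  have "zclosed n {x \<in> aff n. \<forall>i\<in>Z. x i = 0}"
    unfolding zclosed_def using z finite_subset
    by (intro exI[of _ "(\<lambda>i x. x i) ` Z"]) (auto intro: pf_coord)
  then show "\<exists>C D. zclosed n C \<and> zclosed n D \<and> {x \<in> aff n. \<forall>i\<in>Z. x i = 0} = C - D"
    using zclosed_empty by blast
qed

lemma lc_allnz: "Z \<subseteq> {..<n} \<Longrightarrow> lc n (\<lambda>x. \<forall>i\<in>Z. x i \<noteq> 0)"
proof -
  assume z: "Z \<subseteq> {..<n}"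
  have fin: "finite Z" using z finite_subset by blast
  have "(\<lambda>x. \<Prod>i\<in>Z. x i) \<in> polyfun n" using fin z
  proof (induction Z rule: finite_induct)
    case empty then show ?case by (simp add: pf_const)
    next
    case (insert j Z) then show ?case by (auto intro!: pf_mult pf_coord)
  qed
  then have "lc n (\<lambda>x. (\<Prod>i\<in>Z. x i) \<noteq> 0)" by (rule lc_neq)
  then show ?thesis by (rule lc_cong) (simp add: fin)
qed




lemma K0_refl: "K0_eq a a"
  unfolding K0_eq_def using rels.rel_zero by simp

lemma K0_sym: "K0_eq a b \<Longrightarrow> K0_eq b a"
  unfolding K0_eq_def by (drule rels.rel_neg) simp

lemma K0_trans: "K0_eq a b \<Longrightarrow> K0_eq b c \<Longrightarrow> K0_eq a c"
  unfolding K0_eq_def by (drule (1) rels.rel_add) simp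

lemma K0_add: "K0_eq a b \<Longrightarrow> K0_eq c d \<Longrightarrow> K0_eq (\<lambda>v. a v + c v) (\<lambda>v. b v + d v)"
  unfolding K0_eq_def by (drule (1) rels.rel_add) (simp add: algebra_simps)

lemma K0_neg: "K0_eq a b \<Longrightarrow> K0_eq (\<lambda>v. - a v) (\<lambda>v. - b v)"
  unfolding K0_eq_def by (drule rels.rel_neg) (simp add: algebra_simps)

lemma K0_diff: "K0_eq a b \<Longrightarrow> K0_eq c d \<Longrightarrow> K0_eq (\<lambda>v. a v - c v) (\<lambda>v. b v - d v)"
  using K0_add[OF _ K0_neg] by simp

definition Lf :: "int poly \<Rightarrow> fgrp" where
  "Lf p = (\<lambda>v. if snd v = aff (fst v) then coeff p (fst v) else 0)"

lemma Lf_add: "Lf (p + q) = (\<lambda>v. Lf p v + Lf q v)"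
  by (auto simp: Lf_def)
lemma Lf_diff: "Lf (p - q) = (\<lambda>v. Lf p v - Lf q v)"
  by (auto simp: Lf_def)

definition Lq :: "int poly" where "Lq = monom 1 1"

lemma Lq_pow: "Lq ^ n = monom 1 n"
  by (simp add: Lq_def monom_power)

lemma Lf_Lpow: "Lf (monom 1 n) = Lpow n"
  by (auto simp: Lf_def Lpow_def gen_def)

lemma Lpoly_Lf: "Lpoly cs = Lf (\<Sum>(k, c)\<leftarrow>cs. monom c k)"
proof (induction cs)
  case Nil then show ?case by (auto simp: Lpoly_def Lf_def)
next
  case (Cons a cs)
  obtain k c where a: "a = (k, c)" by (cases a)
  have "Lpoly (a # cs) = (\<lambda>v. c * Lpow k v + Lpoly cs v)"
    by (auto simp: Lpoly_def a)
  also have "\<dots> = (\<lambda>v. Lf (monom c k) v + Lf (\<Sum>(k, c)\<leftarrow>cs. monom c k) v)"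
    using Cons by (auto simp: Lf_def Lpow_def gen_def)
  also have "\<dots> = Lf (\<Sum>(k, c)\<leftarrow>a # cs. monom c k)"
    by (simp add: a Lf_add)
  finally show ?case .
qed

definition cl :: "nat \<Rightarrow> (pt \<Rightarrow> bool) \<Rightarrow> int poly \<Rightarrow> bool" where
  "cl n P p \<longleftrightarrow> K0_eq (gen n (S n P)) (Lf p)"

lemma cut_rel:
  assumes "lc n P" "f \<in> polyfun n"
  shows "K0_eq (gen n (S n P)) (\<lambda>v. gen n (S n (\<lambda>x. P x \<and> f x = 0)) v + gen n (S n (\<lambda>x. P x \<and> f x \<noteq> 0)) v)"
proof -
  have c: "zclosed n {x \<in> aff n. f x = 0}" using assms(2) by (rule zclosed_eq)
  have "(\<lambda>v. gen n (S n P) v - gen n (S n P \<inter> {x \<in> aff n. f x = 0}) v - gen n (S n P - {x \<in> aff n. f x = 0}) v) \<in> rels"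
    using assms(1) c unfolding lc_def by (rule rels.rel_cut)
  moreover have "S n P \<inter> {x \<in> aff n. f x = 0} = S n (\<lambda>x. P x \<and> f x = 0)" by (auto simp: S_def)
  moreover have "S n P - {x \<in> aff n. f x = 0} = S n (\<lambda>x. P x \<and> f x \<noteq> 0)" by (auto simp: S_def)
  ultimately show ?thesis unfolding K0_eq_def by (simp add: algebra_simps)
qed

lemma cl_cut:
  assumes "lc n P" "f \<in> polyfun n" "cl n (\<lambda>x. P x \<and> f x = 0) p" "cl n (\<lambda>x. P x \<and> f x \<noteq> 0) q"
  shows "cl n P (p + q)"
  using K0_trans[OF cut_rel[OF assms(1,2)] K0_add[OF assms(3,4)[unfolded cl_def]]]
  unfolding cl_def Lf_add .

lemma cl_cut_minus:
  assumes "lc n P" "f \<in> polyfun n" "cl n P p" "cl n (\<lambda>x. P x \<and> f x = 0) q"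
  shows "cl n (\<lambda>x. P x \<and> f x \<noteq> 0) (p - q)"
proof -
  have "K0_eq (\<lambda>v. gen n (S n P) v - gen n (S n (\<lambda>x. P x \<and> f x = 0)) v) (Lf (p - q))"
    using K0_diff[OF assms(3,4)[unfolded cl_def]] unfolding Lf_diff .
  moreover have "K0_eq (\<lambda>v. gen n (S n P) v - gen n (S n (\<lambda>x. P x \<and> f x = 0)) v) (gen n (S n (\<lambda>x. P x \<and> f x \<noteq> 0)))"
    using K0_diff[OF cut_rel[OF assms(1,2)] K0_refl[of "gen n (S n (\<lambda>x. P x \<and> f x = 0))"]] by simp
  ultimately show ?thesis unfolding cl_def using K0_sym K0_trans by blast
qed

lemma cl_cong: "cl n Q q \<Longrightarrow> (\<And>x. x \<in> aff n \<Longrightarrow> P x \<longleftrightarrow> Q x) \<Longrightarrow> p = q \<Longrightarrow> cl n P p"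
proof -
  assume "cl n Q q" "\<And>x. x \<in> aff n \<Longrightarrow> P x \<longleftrightarrow> Q x" "p = q"
  then have "S n P = S n Q" by (auto simp: S_def)
  then show ?thesis using \<open>cl n Q q\<close> \<open>p = q\<close> by (simp add: cl_def)
qed

lemma cl_iso: "lc n P \<Longrightarrow> lc m Q \<Longrightarrow> isomorphic n (S n P) m (S m Q) \<Longrightarrow> cl m Q p \<Longrightarrow> cl n P p"
  unfolding cl_def lc_def
  by (rule K0_trans[rotated], assumption) (unfold K0_eq_def, rule rels.rel_iso)

lemma cl_aff: "cl n (\<lambda>x. True) (Lq ^ n)"
proof -
  have "S n (\<lambda>x. True) = aff n" by (simp add: S_def)
  then show ?thesis unfolding cl_def Lq_pow Lf_Lpow Lpow_def by (simp add: K0_refl)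
qed

lemma cl_empty: "cl n (\<lambda>x. False) 0"
proof -
  have a: "cl n (\<lambda>x. True \<and> (0::complex) = 0) (Lq^n)" by (rule cl_cong[OF cl_aff]) auto
  have "cl n (\<lambda>x. True \<and> (0::complex) \<noteq> 0) (Lq^n - Lq^n)"
    apply (rule cl_cut_minus[where f="\<lambda>x. 0"])
    apply (rule lc_True) apply (rule pf_const) apply (rule cl_aff) by (rule a)
  then show ?thesis by (rule cl_cong) auto
qed

lemma morphism_poly:
  assumes "\<And>x. x \<in> X \<Longrightarrow> f x \<in> Y" "\<And>j. j < m \<Longrightarrow> (\<lambda>x. f x j) \<in> polyfun n"
  shows "morphism n X m Y f"
  unfolding morphism_def
proof (intro conjI ballI allI impI)
  fix x assume "x \<in> X" then show "f x \<in> Y" by (rule assms(1))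
next
  fix p j assume "p \<in> X" "j < m"
  show "\<exists>g h D. g \<in> polyfun n \<and> h \<in> polyfun n \<and> zclosed n D \<and> p \<notin> D \<and> (\<forall>x\<in>X - D. h x \<noteq> 0 \<and> f x j = g x / h x)"
    by (rule exI[of _ "\<lambda>x. f x j"], rule exI[of _ "\<lambda>x. 1"], rule exI[of _ "{}"])
       (auto intro: assms(2)[OF \<open>j < m\<close>] pf_const zclosed_empty)
qed

lemma drop_iso:
  assumes kn: "k \<le> n" and c: "c \<in> polyfun n" and d: "d \<in> polyfun n"
    and cnz: "\<And>y. y \<in> aff n \<Longrightarrow> P y \<Longrightarrow> c y \<noteq> 0"
    and Q: "\<And>x. x \<in> aff (Suc n) \<Longrightarrow> Q x \<longleftrightarrow> P (del k x) \<and> c (del k x) * x k + d (del k x) = 0"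
  shows "isomorphic (Suc n) (S (Suc n) Q) n (S n P)"
proof -
  define G where "G y = ins k (- d y / c y) y" for y
  have F1: "morphism (Suc n) (S (Suc n) Q) n (S n P) (del k)"
  proof (rule morphism_poly)
    fix x assume "x \<in> S (Suc n) Q" then show "del k x \<in> S n P"
      using Q del_aff[OF kn] by (auto simp: S_def)
  next
    fix j assume "j < n"
    show "(\<lambda>x. del k x j) \<in> polyfun (Suc n)"
      using \<open>j < n\<close> by (cases "j < k") (auto simp: del_def intro: pf_coord)
  qed
  have GY: "G y \<in> S (Suc n) Q" if "y \<in> S n P" for y
  proof -
    have y: "y \<in> aff n" "P y" using that by (auto simp: S_def)
    have "c y \<noteq> 0" using cnz y by auto
    then show ?thesis using y Q[of "G y"] ins_aff[OF kn y(1)] by (auto simp: S_def G_def)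
  qed
  have F2: "morphism n (S n P) (Suc n) (S (Suc n) Q) G"
    unfolding morphism_def
  proof (intro conjI ballI allI impI)
    fix y assume "y \<in> S n P" then show "G y \<in> S (Suc n) Q" by (rule GY)
  next
    fix p j assume p: "p \<in> S n P" and j: "j < Suc n"
    show "\<exists>g h D. g \<in> polyfun n \<and> h \<in> polyfun n \<and> zclosed n D \<and> p \<notin> D \<and>
        (\<forall>x\<in>S n P - D. h x \<noteq> 0 \<and> G x j = g x / h x)"
    proof (cases "j = k")
      case True
      have "c p \<noteq> 0" using p cnz by (auto simp: S_def)
      have "\<forall>x\<in>S n P - {y \<in> aff n. c y = 0}. c x \<noteq> 0 \<and> G x j = (- d x) / c x"
        using True by (auto simp: G_def S_def)
      moreover have "p \<notin> {y \<in> aff n. c y = 0}" using \<open>c p \<noteq> 0\<close> by auto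
      ultimately show ?thesis
        using pf_neg[OF d] c zclosed_eq[OF c] by blast
    next
      case False
      have "(\<lambda>y. G y j) \<in> polyfun n"
      proof (cases "j < k")
        case True
        then have "(\<lambda>y. G y j) = (\<lambda>y. y j)" by (auto simp: G_def ins_def)
        then show ?thesis using True kn by (auto intro: pf_coord)
      next
        case False2: False
        then have "(\<lambda>y. G y j) = (\<lambda>y. y (j - 1))" using False by (auto simp: G_def ins_def)
        then show ?thesis using False2 False j by (auto intro: pf_coord)
      qed
      then show ?thesis
        by (intro exI[of _ "\<lambda>y. G y j"] exI[of _ "\<lambda>y. 1"] exI[of _ "{}"])
           (auto intro: pf_const zclosed_empty)
    qed
  qed
  have I1: "G (del k x) = x" if "x \<in> S (Suc n) Q" for x
  proof -
    have x: "x \<in> aff (Suc n)" "P (del k x)" "c (del k x) * x k + d (del k x) = 0"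
      using that Q by (auto simp: S_def)
    have "c (del k x) \<noteq> 0" using cnz x del_aff[OF kn] by auto
    then have "x k = - d (del k x) / c (del k x)" using x(3)
      by (simp add: field_simps add_eq_0_iff)
    then show ?thesis using ins_del[of k x] by (simp add: G_def)
  qed
  have I2: "del k (G y) = y" for y by (simp add: G_def)
  show ?thesis unfolding isomorphic_def using F1 F2 I1 I2 by blast
qed

lemma cl_drop:
  assumes N: "N = Suc n" and kn: "k \<le> n" and c: "c \<in> polyfun n" and d: "d \<in> polyfun n"
    and P: "lc n P"
    and cnz: "\<And>y. y \<in> aff n \<Longrightarrow> P y \<Longrightarrow> c y \<noteq> 0"
    and Q: "\<And>x. x \<in> aff N \<Longrightarrow> Q x \<longleftrightarrow> P (del k x) \<and> c (del k x) * x k + d (del k x) = 0"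
    and cP: "cl n P p"
  shows "cl N Q p"
proof -
  have lcQ: "lc (Suc n) (\<lambda>x. P (del k x) \<and> c (del k x) * x k + d (del k x) = 0)"
  proof (rule lc_conj)
    show "lc (Suc n) (\<lambda>x. P (del k x))" by (rule lc_del[OF kn P])
    have "(\<lambda>x. c (del k x) * x k + d (del k x)) \<in> polyfun (Suc n)"
      using kn by (intro pf_add pf_mult pf_del c d pf_coord) auto
    then show "lc (Suc n) (\<lambda>x. c (del k x) * x k + d (del k x) = 0)" by (rule lc_eq)
  qed
  have "lc (Suc n) Q" using lcQ Q N by (auto intro: lc_cong)
  then show ?thesis unfolding N
    by (rule cl_iso[OF _ P drop_iso[OF kn c d cnz] cP]) (use Q N in auto)
qed




lemma del_shift: "i \<noteq> j \<Longrightarrow> del j x (if i < j then i else i - 1) = x i"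
  by (auto simp: del_def)

lemma zero_sub_aux: "finite Zs \<Longrightarrow> card Zs = m \<Longrightarrow> Zs \<subseteq> {..<K} \<Longrightarrow>
  cl K (\<lambda>x. \<forall>i\<in>Zs. x i = 0) (Lq ^ (K - m))"
proof (induction m arbitrary: Zs K)
  case 0
  then have "Zs = {}" by simp
  then show ?case by (intro cl_cong[OF cl_aff]) auto
next
  case (Suc m)
  then obtain j where jZ: "j \<in> Zs" by fastforce
  define Z0 where "Z0 = Zs - {j}"
  have Zs: "Zs = insert j Z0" and jn: "j \<notin> Z0" using jZ by (auto simp: Z0_def)
  have finZ0: "finite Z0" and cZ0: "card Z0 = m" using Suc.prems jZ by (auto simp: Z0_def)
  define K' where "K' = K - 1"
  have jK0: "j < K" using Suc.prems(3) jZ by auto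
  have K: "K = Suc K'" using jK0 by (simp add: K'_def)
  have jK: "j \<le> K'" using jK0 by (simp add: K'_def)
  define h where "h i = (if i < j then i else i - 1)" for i
  have sub: "h ` Z0 \<subseteq> {..<K'}"
  proof
    fix y assume "y \<in> h ` Z0"
    then obtain i where i: "i \<in> Z0" "y = h i" by auto
    have "i < K" "i \<noteq> j" using Suc.prems(3) jn i Zs by auto
    then show "y \<in> {..<K'}" using i K jK by (auto simp: h_def)
  qed
  have inj: "inj_on h Z0"
  proof (rule inj_onI)
    fix a b assume ab: "a \<in> Z0" "b \<in> Z0" "h a = h b"
    have "a \<noteq> j" "b \<noteq> j" using jn ab by auto
    then show "a = b" using ab(3) unfolding h_def by (auto split: if_splits; arith)
  qed
  have IH: "cl K' (\<lambda>x. \<forall>i\<in>h ` Z0. x i = 0) (Lq ^ (K' - m))"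
    using Suc.IH[of "h ` Z0" K'] finZ0 sub card_image[OF inj] cZ0 by simp
  have "cl K (\<lambda>x. \<forall>i\<in>Zs. x i = 0) (Lq ^ (K' - m))"
  proof (rule cl_drop[OF K jK pf_const[of 1] pf_const[of 0] lc_allzero[OF sub] _ _ IH])
    show "\<And>y. (1::complex) \<noteq> 0" by simp
    fix x
    have hs: "\<forall>i\<in>Z0. del j x (h i) = x i"
    proof
      fix i assume "i \<in> Z0" then have "i \<noteq> j" using jn by auto
      then show "del j x (h i) = x i" unfolding h_def by (rule del_shift)
    qed
    have "(\<forall>i\<in>h ` Z0. del j x i = 0) \<longleftrightarrow> (\<forall>i\<in>Z0. x i = 0)"
      using hs by auto
    then show "(\<forall>i\<in>Zs. x i = 0) \<longleftrightarrow> (\<forall>i\<in>h ` Z0. del j x i = 0) \<and> 1 * x j + 0 = 0"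
      using Zs by auto
  qed
  then show ?case using K by simp
qed

lemma leaf_aux: "finite Ns \<Longrightarrow> Zs \<union> Ns \<subseteq> {..<K} \<Longrightarrow> Zs \<inter> Ns = {} \<Longrightarrow>
  cl K (\<lambda>x. (\<forall>i\<in>Zs. x i = 0) \<and> (\<forall>i\<in>Ns. x i \<noteq> 0))
     ((Lq - 1) ^ card Ns * Lq ^ (K - card Zs - card Ns))"
proof (induction Ns arbitrary: Zs rule: finite_induct)
  case empty
  have "finite Zs" using empty finite_subset by blast
  then have "cl K (\<lambda>x. \<forall>i\<in>Zs. x i = 0) (Lq ^ (K - card Zs))"
    using zero_sub_aux[of Zs "card Zs" K] empty by auto
  then show ?case by (rule cl_cong) auto
next
  case (insert j Ns)
  have fZ: "finite Zs" using insert.prems(1) finite_subset by blast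
  have jZ: "j \<notin> Zs" using insert.prems(2) by auto
  have A: "cl K (\<lambda>x. (\<forall>i\<in>Zs. x i = 0) \<and> (\<forall>i\<in>Ns. x i \<noteq> 0))
     ((Lq - 1) ^ card Ns * Lq ^ (K - card Zs - card Ns))"
    by (rule insert.IH) (use insert.prems in auto)
  have B0: "cl K (\<lambda>x. (\<forall>i\<in>insert j Zs. x i = 0) \<and> (\<forall>i\<in>Ns. x i \<noteq> 0))
     ((Lq - 1) ^ card Ns * Lq ^ (K - card (insert j Zs) - card Ns))"
    by (rule insert.IH) (use insert.prems insert.hyps in auto)
  have B: "cl K (\<lambda>x. ((\<forall>i\<in>Zs. x i = 0) \<and> (\<forall>i\<in>Ns. x i \<noteq> 0)) \<and> x j = 0)
     ((Lq - 1) ^ card Ns * Lq ^ (K - card Zs - card Ns - 1))"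
    by (rule cl_cong[OF B0]) (use fZ jZ in auto)
  have jK: "j < K" using insert.prems by auto
  have lcP: "lc K (\<lambda>x. (\<forall>i\<in>Zs. x i = 0) \<and> (\<forall>i\<in>Ns. x i \<noteq> 0))"
    using insert.prems by (intro lc_conj lc_allzero lc_allnz) auto
  have C: "cl K (\<lambda>x. ((\<forall>i\<in>Zs. x i = 0) \<and> (\<forall>i\<in>Ns. x i \<noteq> 0)) \<and> x j \<noteq> 0)
     ((Lq - 1) ^ card Ns * Lq ^ (K - card Zs - card Ns) - (Lq - 1) ^ card Ns * Lq ^ (K - card Zs - card Ns - 1))"
    by (rule cl_cut_minus[OF lcP pf_coord[OF jK] A B])
  have "card (Zs \<union> insert j Ns) \<le> K"
    using card_mono[OF finite_lessThan insert.prems(1)] by simp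
  moreover have "card (Zs \<union> insert j Ns) = card Zs + Suc (card Ns)"
    using insert.prems insert.hyps fZ by (subst card_Un_disjoint) auto
  ultimately have le: "card Zs + Suc (card Ns) \<le> K" by simp
  define e where "e = K - card Zs - card Ns - 1"
  have e1: "K - card Zs - card Ns = Suc e" using le unfolding e_def by arith
  have cI: "card (insert j Ns) = Suc (card Ns)" using insert(1,2) by simp
  have e2: "K - card Zs - card (insert j Ns) = e" using le unfolding e_def cI by arith
  have e3: "K - card Zs - card Ns - 1 = e" unfolding e_def ..
  have ar: "(Lq - 1) ^ Suc (card Ns) * Lq ^ e =
     (Lq - 1) ^ card Ns * Lq ^ Suc e - (Lq - 1) ^ card Ns * Lq ^ e"
    by (simp only: power_Suc) (simp add: algebra_simps)
  show ?case
    apply (rule cl_cong[OF C])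
    subgoal by auto
    subgoal apply (subst e3) apply (subst e2) apply (subst e1) apply (subst cI) by (rule ar)
    done
qed

lemma leaf: "Zs \<union> Ns \<subseteq> {..<K} \<Longrightarrow> Zs \<inter> Ns = {} \<Longrightarrow>
  cl K (\<lambda>x. (\<forall>i\<in>Zs. x i = 0) \<and> (\<forall>i\<in>Ns. x i \<noteq> 0))
     ((Lq - 1) ^ card Ns * Lq ^ (K - card Zs - card Ns))"
  by (rule leaf_aux) (auto intro: finite_subset)




lemma cl_split:
  assumes "lc n P" "f \<in> polyfun n" "cl n P1 p" "cl n P2 q"
    "\<And>x. x \<in> aff n \<Longrightarrow> P1 x \<longleftrightarrow> P x \<and> f x = 0"
    "\<And>x. x \<in> aff n \<Longrightarrow> P2 x \<longleftrightarrow> P x \<and> f x \<noteq> 0" "r = p + q"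
  shows "cl n P r"
proof -
  have a: "cl n (\<lambda>x. P x \<and> f x = 0) p" by (rule cl_cong[OF assms(3)]) (use assms(5) in auto)
  have b: "cl n (\<lambda>x. P x \<and> f x \<noteq> 0) q" by (rule cl_cong[OF assms(4)]) (use assms(6) in auto)
  show ?thesis using cl_cut[OF assms(1,2) a b] assms(7) by simp
qed

lemma nsuc: "Suc (Suc 0) = 2" by simp
lemmas pfI = pf_add pf_mult pf_diff pf_coord pf_const pf_power pf_neg
lemmas lcI = lc_conj lc_eq lc_neq lc_True

lemma leafc: "Zs \<union> Ns \<subseteq> {..<K} \<Longrightarrow> Zs \<inter> Ns = {} \<Longrightarrow>
  (\<And>x. x \<in> aff K \<Longrightarrow> P x \<longleftrightarrow> (\<forall>i\<in>Zs. x i = 0) \<and> (\<forall>i\<in>Ns. x i \<noteq> 0)) \<Longrightarrow>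
  card Ns = r \<Longrightarrow> K - card Zs - r = e \<Longrightarrow> cl K P ((Lq - 1) ^ r * Lq ^ e)"
  by (rule cl_cong[OF leaf]) auto

definition Zp :: "pt \<Rightarrow> bool" where
  "Zp x \<longleftrightarrow> x 0 * x 7 + x 4 * x 3 = 0 \<and> x 0 * x 5 + x 4 * x 1 = 0 \<and> x 0 * x 6 + x 4 * x 2 = 0
     \<and> x 0 * x 4 + x 3 * x 7 + 2 * x 1 * x 6 + 2 * x 2 * x 5 = 0"

lemma T00000: "cl (m+8) (\<lambda>x. x 0 = 0 \<and> x 4 = 0 \<and> x 3 = 0 \<and> x 1 = 0 \<and> x 2 = 0) ((Lq - 1)^0 * Lq ^ (m+3))"
  by (rule leafc[of "{0,1,2,3,4}" "{}"]) auto

lemma T00001: "cl (m+8) (\<lambda>x. x 0 = 0 \<and> x 4 = 0 \<and> x 3 = 0 \<and> x 1 = 0 \<and> x 2 \<noteq> 0 \<and> x 5 = 0) ((Lq - 1)^1 * Lq ^ (m+2))"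
  by (rule leafc[of "{0,1,3,4,5}" "{2}"]) auto

lemma T0001: "cl (m+8) (\<lambda>x. x 0 = 0 \<and> x 4 = 0 \<and> x 3 = 0 \<and> x 1 \<noteq> 0 \<and> 2 * x 1 * x 6 + 2 * x 2 * x 5 = 0) ((Lq - 1)^1 * Lq ^ (m+3))"
proof (rule cl_drop[where n="m+7" and k=6 and c="\<lambda>y. 2 * y 1" and d="\<lambda>y. 2 * y 2 * y 5"
      and P="\<lambda>y. y 0 = 0 \<and> y 4 = 0 \<and> y 3 = 0 \<and> y 1 \<noteq> 0"])
  show "cl (m+7) (\<lambda>y. y 0 = 0 \<and> y 4 = 0 \<and> y 3 = 0 \<and> y 1 \<noteq> 0) ((Lq - 1)^1 * Lq ^ (m+3))"
    by (rule leafc[of "{0,3,4}" "{1}"]) auto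
qed (auto simp: del_def simp: algebra_simps intro!: pfI lcI)


lemma T001: "cl (m+8) (\<lambda>x. x 0 = 0 \<and> x 4 = 0 \<and> x 3 \<noteq> 0 \<and> x 3 * x 7 + 2 * x 1 * x 6 + 2 * x 2 * x 5 = 0) ((Lq - 1)^1 * Lq ^ (m+4))"
proof (rule cl_drop[where n="m+7" and k=7 and c="\<lambda>y. y 3" and d="\<lambda>y. 2 * y 1 * y 6 + 2 * y 2 * y 5"
      and P="\<lambda>y. y 0 = 0 \<and> y 4 = 0 \<and> y 3 \<noteq> 0"])
  show "cl (m+7) (\<lambda>y. y 0 = 0 \<and> y 4 = 0 \<and> y 3 \<noteq> 0) ((Lq - 1)^1 * Lq ^ (m+4))"
    by (rule leafc[of "{0,4}" "{3}"]) auto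
qed (auto simp: del_def simp: algebra_simps intro!: pfI lcI)

lemma T01: "cl (m+8) (\<lambda>x. x 0 = 0 \<and> x 4 \<noteq> 0 \<and> x 3 = 0 \<and> x 1 = 0 \<and> x 2 = 0) ((Lq - 1)^1 * Lq ^ (m+3))"
  by (rule leafc[of "{0,1,2,3}" "{4}"]) auto

lemma T0000: "cl (m+8) (\<lambda>x. x 0 = 0 \<and> x 4 = 0 \<and> x 3 = 0 \<and> x 1 = 0 \<and> 2 * x 2 * x 5 = 0)
   (Lq ^ (m+3) + (Lq - 1) * Lq ^ (m+2))"
  apply (rule cl_split[where f="\<lambda>x. x 2", OF _ _ T00000 T00001])
  apply (intro lcI pfI; simp)
  apply (intro pfI; simp)
  by (auto)

lemma T000: "cl (m+8) (\<lambda>x. x 0 = 0 \<and> x 4 = 0 \<and> x 3 = 0 \<and> 2 * x 1 * x 6 + 2 * x 2 * x 5 = 0)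
   (Lq ^ (m+3) + (Lq - 1) * Lq ^ (m+2) + (Lq - 1) * Lq ^ (m+3))"
  apply (rule cl_split[where f="\<lambda>x. x 1", OF _ _ T0000 T0001])
  apply (intro lcI pfI; simp)
  apply (intro pfI; simp)
  by (auto)

lemma T00: "cl (m+8) (\<lambda>x. x 0 = 0 \<and> x 4 = 0 \<and> x 3 * x 7 + 2 * x 1 * x 6 + 2 * x 2 * x 5 = 0)
   (Lq ^ (m+3) + (Lq - 1) * Lq ^ (m+2) + (Lq - 1) * Lq ^ (m+3) + (Lq - 1) * Lq ^ (m+4))"
  apply (rule cl_split[where f="\<lambda>x. x 3", OF _ _ T000 T001])
  apply (intro lcI pfI; simp)
  apply (intro pfI; simp)
  by (auto)

lemma T0: "cl (m+8) (\<lambda>x. x 0 = 0 \<and> Zp x)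
   (Lq ^ (m+3) + (Lq - 1) * Lq ^ (m+2) + (Lq - 1) * Lq ^ (m+3) + (Lq - 1) * Lq ^ (m+4) + (Lq - 1) * Lq ^ (m+3))"
  unfolding Zp_def
  apply (rule cl_split[where f="\<lambda>x. x 4", OF _ _ T00 T01])
  apply (intro lcI pfI; simp)
  apply (intro pfI; simp)
  by auto

lemma sq_split: "(a::complex)^2 - b^2 = 0 \<longleftrightarrow> b - a = 0 \<or> b + a = 0"
proof -
  have "a^2 - b^2 = (a - b) * (a + b)" by (simp add: algebra_simps power2_eq_square)
  then have "a^2 - b^2 = 0 \<longleftrightarrow> a - b = 0 \<or> a + b = 0" by simp
  then show ?thesis by (auto simp: add.commute)
qed

lemma sqA: "(a::complex)^2 - b^2 = 0 \<and> b - a = 0 \<longleftrightarrow> b - a = 0"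
  by (auto simp: algebra_simps)
lemma sqB: "(a::complex) \<noteq> 0 \<Longrightarrow> (a^2 - b^2 = 0 \<and> b - a \<noteq> 0 \<longleftrightarrow> b + a = 0)"
  using sq_split[of a b] by auto

lemma U0: "cl (m+5) (\<lambda>y. y 0 \<noteq> 0 \<and> y 4 = 0) ((Lq - 1)^1 * Lq ^ (m+3))"
  by (rule leafc[of "{4}" "{0}"]) auto

lemma U1: "cl (m+5) (\<lambda>y. y 0 \<noteq> 0 \<and> y 4 \<noteq> 0 \<and> y 1 \<noteq> 0 \<and> y 0 ^ 2 - y 3 ^ 2 - 4 * y 1 * y 2 = 0) ((Lq - 1)^3 * Lq ^ (m+1))"
proof (rule cl_drop[where n="m+4" and k=2 and c="\<lambda>z. - 4 * z 1" and d="\<lambda>z. z 0 ^ 2 - z 2 ^ 2"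
      and P="\<lambda>z. z 0 \<noteq> 0 \<and> z 3 \<noteq> 0 \<and> z 1 \<noteq> 0"])
  show "cl (m+4) (\<lambda>z. z 0 \<noteq> 0 \<and> z 3 \<noteq> 0 \<and> z 1 \<noteq> 0) ((Lq - 1)^3 * Lq ^ (m+1))"
    by (rule leafc[of "{}" "{0,1,3}"]) auto
qed (auto simp: del_def algebra_simps nsuc intro!: pfI lcI)

lemma U2: "cl (m+5) (\<lambda>y. y 0 \<noteq> 0 \<and> y 4 \<noteq> 0 \<and> y 1 = 0 \<and> y 3 - y 0 = 0) ((Lq - 1)^2 * Lq ^ (m+1))"
proof (rule cl_drop[where n="m+4" and k=3 and c="\<lambda>z. 1" and d="\<lambda>z. - z 0"
      and P="\<lambda>z. z 0 \<noteq> 0 \<and> z 3 \<noteq> 0 \<and> z 1 = 0"])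
  show "cl (m+4) (\<lambda>z. z 0 \<noteq> 0 \<and> z 3 \<noteq> 0 \<and> z 1 = 0) ((Lq - 1)^2 * Lq ^ (m+1))"
    by (rule leafc[of "{1}" "{0,3}"]) auto
qed (auto simp: del_def simp: algebra_simps intro!: pfI lcI)

lemma U3: "cl (m+5) (\<lambda>y. y 0 \<noteq> 0 \<and> y 4 \<noteq> 0 \<and> y 1 = 0 \<and> y 3 + y 0 = 0) ((Lq - 1)^2 * Lq ^ (m+1))"
proof (rule cl_drop[where n="m+4" and k=3 and c="\<lambda>z. 1" and d="\<lambda>z. z 0"
      and P="\<lambda>z. z 0 \<noteq> 0 \<and> z 3 \<noteq> 0 \<and> z 1 = 0"])
  show "cl (m+4) (\<lambda>z. z 0 \<noteq> 0 \<and> z 3 \<noteq> 0 \<and> z 1 = 0) ((Lq - 1)^2 * Lq ^ (m+1))"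
    by (rule leafc[of "{1}" "{0,3}"]) auto
qed (auto simp: del_def simp: algebra_simps intro!: pfI lcI)

lemma U23: "cl (m+5) (\<lambda>y. y 0 \<noteq> 0 \<and> y 4 \<noteq> 0 \<and> y 1 = 0 \<and> y 0 ^ 2 - y 3 ^ 2 = 0) ((Lq - 1)^2 * Lq ^ (m+1) + (Lq - 1)^2 * Lq ^ (m+1))"
  apply (rule cl_split[where f="\<lambda>y. y 3 - y 0", OF _ _ U2 U3])
  apply (intro lcI pfI; simp)
  apply (intro pfI; simp)
  subgoal for x using sqA[of "x 0" "x 3"] by blast
  subgoal for x using sqB[of "x 0" "x 3"] by blast
  by simp

lemma U12: "cl (m+5) (\<lambda>y. y 0 \<noteq> 0 \<and> y 4 \<noteq> 0 \<and> y 0 ^ 2 - y 3 ^ 2 - 4 * y 1 * y 2 = 0)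
   ((Lq - 1)^2 * Lq ^ (m+1) + (Lq - 1)^2 * Lq ^ (m+1) + (Lq - 1)^3 * Lq ^ (m+1))"
  apply (rule cl_split[where f="\<lambda>y. y 1", OF _ _ U23 U1])
  apply (intro lcI pfI; simp)
  apply (intro pfI; simp)
  by (auto)

lemma U: "cl (m+5) (\<lambda>y. y 0 \<noteq> 0 \<and> y 4 * (y 0 ^ 2 - y 3 ^ 2 - 4 * y 1 * y 2) = 0)
   ((Lq - 1)^1 * Lq ^ (m+3) + ((Lq - 1)^2 * Lq ^ (m+1) + (Lq - 1)^2 * Lq ^ (m+1) + (Lq - 1)^3 * Lq ^ (m+1)))"
  apply (rule cl_split[where f="\<lambda>y. y 4", OF _ _ U0 U12])
  apply (intro lcI pfI; simp)
  apply (intro pfI; simp)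
  by (auto)


lemma V1: "cl (m+6) (\<lambda>y. y 0 \<noteq> 0 \<and> y 4 * (y 0 ^ 2 - y 3 ^ 2 - 4 * y 1 * y 2) = 0 \<and> y 0 * y 5 + y 4 * y 1 = 0)
   ((Lq - 1)^1 * Lq ^ (m+3) + ((Lq - 1)^2 * Lq ^ (m+1) + (Lq - 1)^2 * Lq ^ (m+1) + (Lq - 1)^3 * Lq ^ (m+1)))"
  apply (rule cl_drop[where n="m+5" and k=5 and c="\<lambda>z. z 0" and d="\<lambda>z. z 4 * z 1", OF _ _ _ _ _ _ _ U])
  apply simp
  apply simp
  apply (intro pfI; simp)
  apply (intro pfI; simp)
  apply (intro lcI pfI; simp)
  by (auto simp: del_def algebra_simps nsuc)

lemma V2: "cl (m+7) (\<lambda>y. y 0 \<noteq> 0 \<and> y 4 * (y 0 ^ 2 - y 3 ^ 2 - 4 * y 1 * y 2) = 0 \<and> y 0 * y 5 + y 4 * y 1 = 0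
     \<and> y 0 * y 6 + y 4 * y 2 = 0)
   ((Lq - 1)^1 * Lq ^ (m+3) + ((Lq - 1)^2 * Lq ^ (m+1) + (Lq - 1)^2 * Lq ^ (m+1) + (Lq - 1)^3 * Lq ^ (m+1)))"
  apply (rule cl_drop[where n="m+6" and k=6 and c="\<lambda>z. z 0" and d="\<lambda>z. z 4 * z 2", OF _ _ _ _ _ _ _ V1])
  apply simp
  apply simp
  apply (intro pfI; simp)
  apply (intro pfI; simp)
  apply (intro lcI pfI; simp)
  by (auto simp: del_def algebra_simps nsuc)

lemma V3: "cl (m+8) (\<lambda>y. y 0 \<noteq> 0 \<and> y 4 * (y 0 ^ 2 - y 3 ^ 2 - 4 * y 1 * y 2) = 0 \<and> y 0 * y 5 + y 4 * y 1 = 0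
     \<and> y 0 * y 6 + y 4 * y 2 = 0 \<and> y 0 * y 7 + y 4 * y 3 = 0)
   ((Lq - 1)^1 * Lq ^ (m+3) + ((Lq - 1)^2 * Lq ^ (m+1) + (Lq - 1)^2 * Lq ^ (m+1) + (Lq - 1)^3 * Lq ^ (m+1)))"
  apply (rule cl_drop[where n="m+7" and k=7 and c="\<lambda>z. z 0" and d="\<lambda>z. z 4 * z 3", OF _ _ _ _ _ _ _ V2])
  apply simp
  apply simp
  apply (intro pfI; simp)
  apply (intro pfI; simp)
  apply (intro lcI pfI; simp)
  by (auto simp: del_def algebra_simps nsuc)

lemma T1eq:
  fixes a v s u f b g c :: complex
  assumes a: "a \<noteq> 0"
  shows "(a*v + s*u = 0 \<and> a*f + s*b = 0 \<and> a*g + s*c = 0 \<and> a*s + u*v + 2*b*g + 2*c*f = 0) \<longleftrightarrow>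
    (s*(a^2 - u^2 - 4*b*c) = 0 \<and> a*f + s*b = 0 \<and> a*g + s*c = 0 \<and> a*v + s*u = 0)"
proof -
  have id: "a*(a*s + u*v + 2*b*g + 2*c*f) = s*(a^2 - u^2 - 4*b*c) + u*(a*v + s*u) + 2*b*(a*g + s*c) + 2*c*(a*f + s*b)"
    by (simp add: algebra_simps power2_eq_square)
  show ?thesis
  proof (cases "a*v + s*u = 0 \<and> a*f + s*b = 0 \<and> a*g + s*c = 0")
    case True
    then have E1: "a*v + s*u = 0" and E2: "a*f + s*b = 0" and E3: "a*g + s*c = 0" by auto
    have "a*(a*s + u*v + 2*b*g + 2*c*f) = s*(a^2 - u^2 - 4*b*c)"
      using id by (simp add: E1 E2 E3)
    then show ?thesis using a True by auto
  next
    case False then show ?thesis by auto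
  qed
qed

lemma Zmain: "cl (m+8) Zp
   (((Lq - 1)^0 * Lq ^ (m+3) + (Lq - 1)^1 * Lq ^ (m+2) + (Lq - 1)^1 * Lq ^ (m+3) + (Lq - 1)^1 * Lq ^ (m+4) + (Lq - 1)^1 * Lq ^ (m+3))
   + ((Lq - 1)^1 * Lq ^ (m+3) + ((Lq - 1)^2 * Lq ^ (m+1) + (Lq - 1)^2 * Lq ^ (m+1) + (Lq - 1)^3 * Lq ^ (m+1))))"
  apply (rule cl_split[where f="\<lambda>x. x 0", OF _ _ T0 V3])
  apply (unfold Zp_def; intro lcI pfI; simp)
  apply (intro pfI; simp)
  subgoal by auto
  subgoal for x unfolding Zp_def
    using T1eq[where a="x 0" and v="x 7" and s="x 4" and u="x 3" and f="x 5" and b="x 1" and g="x 6" and c="x 2"]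
    by blast
  by simp

definition Npoly :: "int poly" where
  "Npoly = Lq^5 + 3 * Lq^4 - 2 * Lq^3 - 2 * Lq^2 + Lq"

lemma Zclass: "cl (m+8) Zp (Npoly * Lq ^ m)"
proof (rule cl_cong[OF Zmain])
  show "Npoly * Lq ^ m = ((Lq - 1)^0 * Lq ^ (m+3) + (Lq - 1)^1 * Lq ^ (m+2) + (Lq - 1)^1 * Lq ^ (m+3) + (Lq - 1)^1 * Lq ^ (m+4) + (Lq - 1)^1 * Lq ^ (m+3))
   + ((Lq - 1)^1 * Lq ^ (m+3) + ((Lq - 1)^2 * Lq ^ (m+1) + (Lq - 1)^2 * Lq ^ (m+1) + (Lq - 1)^3 * Lq ^ (m+1)))"
    unfolding Npoly_def power_add by (simp add: algebra_simps power2_eq_square power3_eq_cube eval_nat_numeral)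
qed simp




lemma monom_Lq: "monom c k = of_int c * Lq ^ k"
  by (simp add: Lq_pow of_int_poly smult_monom)

definition bA :: "pt \<Rightarrow> complex" where "bA x = 2 * x 0 * x 4 + x 1 * x 6 + x 2 * x 5"
definition bB :: "pt \<Rightarrow> complex" where "bB x = x 0 * x 5 + x 1 * x 7 + x 4 * x 1 + x 5 * x 3"
definition bC :: "pt \<Rightarrow> complex" where "bC x = x 2 * x 4 + x 3 * x 6 + x 6 * x 0 + x 7 * x 2"
definition bD :: "pt \<Rightarrow> complex" where "bD x = x 2 * x 5 + 2 * x 3 * x 7 + x 6 * x 1"

lemma trW_eq: "trW x = bA x * x 8 + bB x * x 10 + bC x * x 9 + bD x * x 11"
  by (simp add: trW_def mtr_def mmul_def mat_of_def bA_def bB_def bC_def bD_def eval_nat_numeral algebra_simps)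

definition Zo :: "pt \<Rightarrow> bool" where
  "Zo x \<longleftrightarrow> bA x = 0 \<and> bB x = 0 \<and> bC x = 0 \<and> bD x = 0"

definition phi :: "pt \<Rightarrow> pt" where
  "phi x = (\<lambda>i. if i = 0 then x 0 + x 3 else if i = 3 then x 0 - x 3 else
     if i = 4 then x 4 + x 7 else if i = 7 then x 4 - x 7 else x i)"
definition psi :: "pt \<Rightarrow> pt" where
  "psi y = (\<lambda>i. if i = 0 then (y 0 + y 3) / 2 else if i = 3 then (y 0 - y 3) / 2 else
     if i = 4 then (y 4 + y 7) / 2 else if i = 7 then (y 4 - y 7) / 2 else y i)"

lemma psi_phi: "psi (phi x) = x"
  by (rule ext) (simp add: phi_def psi_def field_simps)
lemma phi_psi: "phi (psi y) = y"
  by (rule ext) (simp add: phi_def psi_def field_simps)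

lemma Zp_phi: "Zp (phi x) \<longleftrightarrow> Zo x"
proof -
  have e1: "phi x 0 * phi x 7 + phi x 4 * phi x 3 = bA x - bD x"
    by (simp add: phi_def bA_def bD_def algebra_simps)
  have e2: "phi x 0 * phi x 5 + phi x 4 * phi x 1 = bB x"
    by (simp add: phi_def bB_def algebra_simps)
  have e3: "phi x 0 * phi x 6 + phi x 4 * phi x 2 = bC x"
    by (simp add: phi_def bC_def algebra_simps)
  have e4: "phi x 0 * phi x 4 + phi x 3 * phi x 7 + 2 * phi x 1 * phi x 6 + 2 * phi x 2 * phi x 5 = bA x + bD x"
    by (simp add: phi_def bA_def bD_def algebra_simps)
  have "(bA x - bD x = 0 \<and> bA x + bD x = 0) \<longleftrightarrow> (bA x = 0 \<and> bD x = 0)"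
    by (auto simp: algebra_simps)
  then show ?thesis unfolding Zp_def Zo_def e1 e2 e3 e4 by blast
qed

lemma Zo_psi: "Zo (psi y) \<longleftrightarrow> Zp y"
  using Zp_phi[of "psi y"] by (simp add: phi_psi)

lemma phi_aff: "8 \<le> N \<Longrightarrow> x \<in> aff N \<Longrightarrow> phi x \<in> aff N"
  by (auto simp: aff_def phi_def)
lemma psi_aff: "8 \<le> N \<Longrightarrow> x \<in> aff N \<Longrightarrow> psi x \<in> aff N"
  by (auto simp: aff_def psi_def)

lemma pf_phi: "8 \<le> N \<Longrightarrow> j < N \<Longrightarrow> (\<lambda>x. phi x j) \<in> polyfun N"
proof -
  assume a: "8 \<le> N" "j < N"
  consider "j = 0" | "j = 3" | "j = 4" | "j = 7" | "j \<noteq> 0 \<and> j \<noteq> 3 \<and> j \<noteq> 4 \<and> j \<noteq> 7" by blast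
  then show ?thesis
  proof cases
    case 5 then have "(\<lambda>x. phi x j) = (\<lambda>x. x j)" by (auto simp: phi_def)
    then show ?thesis using a by (auto intro: pf_coord)
  qed (use a in \<open>auto simp: phi_def intro!: pfI\<close>)
qed

lemma pf_psi: "8 \<le> N \<Longrightarrow> j < N \<Longrightarrow> (\<lambda>x. psi x j) \<in> polyfun N"
proof -
  assume a: "8 \<le> N" "j < N"
  consider "j = 0" | "j = 3" | "j = 4" | "j = 7" | "j \<noteq> 0 \<and> j \<noteq> 3 \<and> j \<noteq> 4 \<and> j \<noteq> 7" by blast
  then show ?thesis
  proof cases
    case 5 then have "(\<lambda>x. psi x j) = (\<lambda>x. x j)" by (auto simp: psi_def)
    then show ?thesis using a by (auto intro: pf_coord)
  qed (use a in \<open>auto simp: psi_def intro!: pfI pf_divc\<close>)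
qed

lemma lc_Zo: "8 \<le> N \<Longrightarrow> lc N Zo"
  unfolding Zo_def bA_def bB_def bC_def bD_def by (intro lcI pfI; simp)
lemma lc_Zp: "8 \<le> N \<Longrightarrow> lc N Zp"
  unfolding Zp_def by (intro lcI pfI; simp)

lemma Zo_class: "cl (m+8) Zo (Npoly * Lq ^ m)"
proof (rule cl_iso[OF lc_Zo lc_Zp _ Zclass])
  show "isomorphic (m + 8) (S (m + 8) Zo) (m + 8) (S (m + 8) Zp)"
    unfolding isomorphic_def
  proof (intro exI conjI)
    show "morphism (m + 8) (S (m + 8) Zo) (m + 8) (S (m + 8) Zp) phi"
      by (rule morphism_poly) (auto simp: S_def Zp_phi phi_aff intro: pf_phi)
    show "morphism (m + 8) (S (m + 8) Zp) (m + 8) (S (m + 8) Zo) psi"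
      by (rule morphism_poly) (auto simp: S_def Zo_psi psi_aff intro: pf_psi)
  qed (auto simp: psi_phi phi_psi)
qed simp_all


definition ceq :: "nat \<Rightarrow> (pt \<Rightarrow> bool) \<Rightarrow> fgrp \<Rightarrow> bool" where
  "ceq n P a \<longleftrightarrow> K0_eq (gen n (S n P)) a"

lemma ceq_refl: "ceq n P (gen n (S n P))"
  unfolding ceq_def by (rule K0_refl)

lemma ceq_cl: "cl n P p \<Longrightarrow> ceq n P (Lf p)"
  unfolding ceq_def cl_def .

lemma ceq_split:
  assumes "lc n P" "f \<in> polyfun n" "ceq n P1 a" "ceq n P2 b"
    "\<And>x. x \<in> aff n \<Longrightarrow> P1 x \<longleftrightarrow> P x \<and> f x = 0"
    "\<And>x. x \<in> aff n \<Longrightarrow> P2 x \<longleftrightarrow> P x \<and> f x \<noteq> 0"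
  shows "ceq n P (\<lambda>v. a v + b v)"
proof -
  have e1: "S n P1 = S n (\<lambda>x. P x \<and> f x = 0)" using assms(5) by (auto simp: S_def)
  have e2: "S n P2 = S n (\<lambda>x. P x \<and> f x \<noteq> 0)" using assms(6) by (auto simp: S_def)
  show ?thesis
    using K0_trans[OF cut_rel[OF assms(1,2)] K0_add[OF assms(3,4)[unfolded ceq_def e1 e2]]]
    unfolding ceq_def .
qed

lemma ceq_drop:
  assumes N: "N = Suc n" and kn: "k \<le> n" and c: "c \<in> polyfun n" and d: "d \<in> polyfun n"
    and P: "lc n P"
    and cnz: "\<And>y. y \<in> aff n \<Longrightarrow> P y \<Longrightarrow> c y \<noteq> 0"
    and Q: "\<And>x. x \<in> aff N \<Longrightarrow> Q x \<longleftrightarrow> P (del k x) \<and> c (del k x) * x k + d (del k x) = 0"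
  shows "ceq N Q (gen n (S n P))"
proof -
  have lcQ: "lc (Suc n) (\<lambda>x. P (del k x) \<and> c (del k x) * x k + d (del k x) = 0)"
  proof (rule lc_conj)
    show "lc (Suc n) (\<lambda>x. P (del k x))" by (rule lc_del[OF kn P])
    have "(\<lambda>x. c (del k x) * x k + d (del k x)) \<in> polyfun (Suc n)"
      using kn by (intro pf_add pf_mult pf_del c d pf_coord) auto
    then show "lc (Suc n) (\<lambda>x. c (del k x) * x k + d (del k x) = 0)" by (rule lc_eq)
  qed
  have lQ: "lc (Suc n) Q" using lcQ Q N by (auto intro: lc_cong)
  have iso: "isomorphic (Suc n) (S (Suc n) Q) n (S n P)"
    by (rule drop_iso[OF kn c d cnz]) (use Q N in auto)
  have "(\<lambda>v. gen (Suc n) (S (Suc n) Q) v - gen n (S n P) v) \<in> rels"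
    using lQ P iso unfolding lc_def by (rule rels.rel_iso)
  then show ?thesis unfolding ceq_def K0_eq_def N .
qed

lemma pf_bA: "8 \<le> N \<Longrightarrow> bA \<in> polyfun N"
  unfolding bA_def by (intro pfI; simp)
lemma pf_bB: "8 \<le> N \<Longrightarrow> bB \<in> polyfun N"
  unfolding bB_def by (intro pfI; simp)
lemma pf_bC: "8 \<le> N \<Longrightarrow> bC \<in> polyfun N"
  unfolding bC_def by (intro pfI; simp)
lemma pf_bD: "8 \<le> N \<Longrightarrow> bD \<in> polyfun N"
  unfolding bD_def by (intro pfI; simp)
lemmas pfB = pf_bA pf_bB pf_bC pf_bD

lemma b_del: "8 \<le> k \<Longrightarrow> bA (del k x) = bA x" "8 \<le> k \<Longrightarrow> bB (del k x) = bB x"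
  "8 \<le> k \<Longrightarrow> bC (del k x) = bC x" "8 \<le> k \<Longrightarrow> bD (del k x) = bD x"
  by (simp_all add: bA_def bB_def bC_def bD_def del_def)

lemma del_num: "del k x (numeral n) = (if numeral n < k then x (numeral n) else x (Suc (numeral n)))"
  by (simp add: del_def)

lemma M0: "ceq 12 (\<lambda>x. trW x = l \<and> bA x \<noteq> 0) (gen 11 (S 11 (\<lambda>y. bA y \<noteq> 0)))"
  apply (rule ceq_drop[where n=11 and k=8 and c=bA and d="\<lambda>y. bB y * y 9 + bC y * y 8 + bD y * y 10 - l"])
  apply simp
  apply simp
  apply (rule pf_bA; simp)
  apply (intro pfI pfB; simp)
  apply (intro lcI pfI pfB; simp)
  apply simp
  by (auto simp: trW_eq b_del del_num algebra_simps)

lemma M1: "ceq 12 (\<lambda>x. (trW x = l \<and> bA x = 0) \<and> bB x \<noteq> 0) (gen 11 (S 11 (\<lambda>y. bA y = 0 \<and> bB y \<noteq> 0)))"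
  apply (rule ceq_drop[where n=11 and k=10 and c=bB and d="\<lambda>y. bA y * y 8 + bC y * y 9 + bD y * y 10 - l"])
  apply simp
  apply simp
  apply (rule pf_bB; simp)
  apply (intro pfI pfB; simp)
  apply (intro lcI pfI pfB; simp)
  apply simp
  by (auto simp: trW_eq b_del del_num algebra_simps)

lemma M2: "ceq 12 (\<lambda>x. ((trW x = l \<and> bA x = 0) \<and> bB x = 0) \<and> bC x \<noteq> 0) (gen 11 (S 11 (\<lambda>y. (bA y = 0 \<and> bB y = 0) \<and> bC y \<noteq> 0)))"
  apply (rule ceq_drop[where n=11 and k=9 and c=bC and d="\<lambda>y. bA y * y 8 + bB y * y 9 + bD y * y 10 - l"])
  apply simp
  apply simp
  apply (rule pf_bC; simp)
  apply (intro pfI pfB; simp)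
  apply (intro lcI pfI pfB; simp)
  apply simp
  by (auto simp: trW_eq b_del del_num algebra_simps)

lemma M3: "ceq 12 (\<lambda>x. (((trW x = l \<and> bA x = 0) \<and> bB x = 0) \<and> bC x = 0) \<and> bD x \<noteq> 0) (gen 11 (S 11 (\<lambda>y. ((bA y = 0 \<and> bB y = 0) \<and> bC y = 0) \<and> bD y \<noteq> 0)))"
  apply (rule ceq_drop[where n=11 and k=11 and c=bD and d="\<lambda>y. bA y * y 8 + bB y * y 10 + bC y * y 9 - l"])
  apply simp
  apply simp
  apply (rule pf_bD; simp)
  apply (intro pfI pfB; simp)
  apply (intro lcI pfI pfB; simp)
  apply simp
  by (auto simp: trW_eq b_del del_num algebra_simps)


definition "G0 = gen 11 (S 11 (\<lambda>y. bA y \<noteq> 0))"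
definition "G1 = gen 11 (S 11 (\<lambda>y. bA y = 0 \<and> bB y \<noteq> 0))"
definition "G2 = gen 11 (S 11 (\<lambda>y. (bA y = 0 \<and> bB y = 0) \<and> bC y \<noteq> 0))"
definition "G3 = gen 11 (S 11 (\<lambda>y. ((bA y = 0 \<and> bB y = 0) \<and> bC y = 0) \<and> bD y \<noteq> 0))"

lemma pf_trW: "(\<lambda>x. trW x - l) \<in> polyfun 12"
  unfolding trW_eq by (intro pfI pfB; simp)

lemma lc_trW: "lc 12 (\<lambda>x. trW x = l)"
  by (rule lc_cong[OF lc_eq[OF pf_trW[of l]]]) simp

lemma Zo11: "cl 11 Zo (Npoly * Lq ^ 3)"
proof - have e: "3 + 8 = (11::nat)" by simp show ?thesis using Zo_class[of 3] unfolding e . qed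
lemma Zo12: "cl 12 Zo (Npoly * Lq ^ 4)"
proof - have e: "4 + 8 = (12::nat)" by simp show ?thesis using Zo_class[of 4] unfolding e . qed
lemma Lf_zero: "Lf 0 = (\<lambda>v. 0)" by (rule ext) (simp add: Lf_def)

lemma A11: "ceq 11 (\<lambda>y. True) (\<lambda>v. (((Lf (Npoly * Lq ^ 3) v + G3 v) + G2 v) + G1 v) + G0 v)"
proof -
  have B3: "ceq 11 (\<lambda>y. (bA y = 0 \<and> bB y = 0) \<and> bC y = 0) (\<lambda>v. Lf (Npoly * Lq ^ 3) v + G3 v)"
    apply (rule ceq_split[where f=bD, OF _ _ ceq_cl[OF Zo11] ceq_refl[of 11 "\<lambda>y. ((bA y = 0 \<and> bB y = 0) \<and> bC y = 0) \<and> bD y \<noteq> 0", folded G3_def]])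
    apply (intro lcI pfI pfB; simp)
    apply (rule pf_bD; simp)
    by (auto simp: Zo_def G3_def)
  have B2: "ceq 11 (\<lambda>y. bA y = 0 \<and> bB y = 0) (\<lambda>v. (Lf (Npoly * Lq ^ 3) v + G3 v) + G2 v)"
    apply (rule ceq_split[where f=bC, OF _ _ B3 ceq_refl[of 11 "\<lambda>y. (bA y = 0 \<and> bB y = 0) \<and> bC y \<noteq> 0", folded G2_def]])
    apply (intro lcI pfI pfB; simp)
    apply (rule pf_bC; simp)
    by (auto simp: G2_def)
  have B1: "ceq 11 (\<lambda>y. bA y = 0) (\<lambda>v. ((Lf (Npoly * Lq ^ 3) v + G3 v) + G2 v) + G1 v)"
    apply (rule ceq_split[where f=bB, OF _ _ B2 ceq_refl[of 11 "\<lambda>y. bA y = 0 \<and> bB y \<noteq> 0", folded G1_def]])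
    apply (intro lcI pfI pfB; simp)
    apply (rule pf_bB; simp)
    by (auto simp: G1_def)
  show ?thesis
    apply (rule ceq_split[where f=bA, OF _ _ B1 ceq_refl[of 11 "\<lambda>y. bA y \<noteq> 0", folded G0_def]])
    apply (intro lcI pfI pfB; simp)
    apply (rule pf_bA; simp)
    by (auto simp: G0_def)
qed

lemma W12: "ceq 12 (\<lambda>x. trW x = l \<and> Zo x) R \<Longrightarrow>
  ceq 12 (\<lambda>x. trW x = l) (\<lambda>v. (((R v + G3 v) + G2 v) + G1 v) + G0 v)"
proof -
  assume R: "ceq 12 (\<lambda>x. trW x = l \<and> Zo x) R"
  have B3: "ceq 12 (\<lambda>x. ((trW x = l \<and> bA x = 0) \<and> bB x = 0) \<and> bC x = 0) (\<lambda>v. R v + G3 v)"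
    apply (rule ceq_split[where f=bD, OF _ _ R M3[unfolded G3_def[symmetric]]])
    apply (intro lcI lc_trW pfI pfB; simp)
    apply (rule pf_bD; simp)
    by (auto simp: Zo_def)
  have B2: "ceq 12 (\<lambda>x. (trW x = l \<and> bA x = 0) \<and> bB x = 0) (\<lambda>v. (R v + G3 v) + G2 v)"
    apply (rule ceq_split[where f=bC, OF _ _ B3 M2[unfolded G2_def[symmetric]]])
    apply (intro lcI lc_trW pfI pfB; simp)
    apply (rule pf_bC; simp)
    by auto
  have B1: "ceq 12 (\<lambda>x. trW x = l \<and> bA x = 0) (\<lambda>v. ((R v + G3 v) + G2 v) + G1 v)"
    apply (rule ceq_split[where f=bB, OF _ _ B2 M1[unfolded G1_def[symmetric]]])
    apply (intro lcI lc_trW pfI pfB; simp)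
    apply (rule pf_bB; simp)
    by auto
  show ?thesis
    apply (rule ceq_split[where f=bA, OF _ _ B1 M0[unfolded G0_def[symmetric]]])
    apply (rule lc_trW)
    apply (rule pf_bA; simp)
    by auto
qed

lemma MW_class:
  assumes R: "ceq 12 (\<lambda>x. trW x = l \<and> Zo x) R"
  shows "K0_eq (gen 12 (MW l)) (\<lambda>v. Lf (Lq ^ 11) v - Lf (Npoly * Lq ^ 3) v + R v)"
proof -
  let ?Z = "Lf (Npoly * Lq ^ 3)"
  have h1: "K0_eq (gen 12 (MW l)) (\<lambda>v. (((R v + G3 v) + G2 v) + G1 v) + G0 v)"
    using W12[OF R] unfolding ceq_def MW_def S_def .
  have h2: "K0_eq (Lf (Lq ^ 11)) (\<lambda>v. (((?Z v + G3 v) + G2 v) + G1 v) + G0 v)"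
    using K0_trans[OF K0_sym[OF cl_aff[of 11, unfolded cl_def]] A11[unfolded ceq_def]] .
  have h3: "K0_eq (\<lambda>v. ((((?Z v + G3 v) + G2 v) + G1 v) + G0 v) - ?Z v + R v)
                  (\<lambda>v. Lf (Lq ^ 11) v - ?Z v + R v)"
    by (rule K0_add[OF K0_diff[OF K0_sym[OF h2] K0_refl] K0_refl])
  have e: "(\<lambda>v. (((R v + G3 v) + G2 v) + G1 v) + G0 v) = (\<lambda>v. ((((?Z v + G3 v) + G2 v) + G1 v) + G0 v) - ?Z v + R v)"
    by (simp add: algebra_simps)
  show ?thesis using K0_trans[OF h1[unfolded e] h3] .
qed

lemma MW1: "K0_eq (gen 12 (MW 1)) (Lf (Lq ^ 11 - Npoly * Lq ^ 3))"
proof -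
  have "cl 12 (\<lambda>x. trW x = 1 \<and> Zo x) 0"
    by (rule cl_cong[OF cl_empty]) (auto simp: trW_eq Zo_def)
  from MW_class[OF ceq_cl[OF this]] show ?thesis
    by (simp add: Lf_diff Lf_zero)
qed

lemma MW0: "K0_eq (gen 12 (MW 0)) (Lf (Lq ^ 11 - Npoly * Lq ^ 3 + Npoly * Lq ^ 4))"
proof -
  have "cl 12 (\<lambda>x. trW x = 0 \<and> Zo x) (Npoly * Lq ^ 4)"
    by (rule cl_cong[OF Zo12]) (auto simp: trW_eq Zo_def)
  from MW_class[OF ceq_cl[OF this]] show ?thesis
    by (simp add: Lf_diff Lf_add)
qed

theorem mainTheorem6:
  shows "K0_eq (gen 12 (MW 1)) (Lpoly [(11, 1), (8, -1), (7, -3), (6, 2), (5, 2), (4, -1)])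
       \<and> K0_eq (gen 12 (MW 0)) (Lpoly [(11, 1), (9, 1), (8, 2), (7, -5), (5, 3), (4, -1)])
       \<and> K0_eq (\<lambda>v. gen 12 (MW 0) v - gen 12 (MW 1) v)
               (Lpoly [(9, 1), (8, 3), (7, -2), (6, -2), (5, 1)])"
proof (intro conjI)
  have p1: "(\<Sum>(k, c)\<leftarrow>[(11::nat, 1::int), (8, -1), (7, -3), (6, 2), (5, 2), (4, -1)]. monom c k) = Lq ^ 11 - Npoly * Lq ^ 3"
    unfolding Npoly_def by (simp add: monom_Lq; algebra)
  have p2: "(\<Sum>(k, c)\<leftarrow>[(11::nat, 1::int), (9, 1), (8, 2), (7, -5), (5, 3), (4, -1)]. monom c k) = Lq ^ 11 - Npoly * Lq ^ 3 + Npoly * Lq ^ 4"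
    unfolding Npoly_def by (simp add: monom_Lq; algebra)
  have p3: "(\<Sum>(k, c)\<leftarrow>[(9::nat, 1::int), (8, 3), (7, -2), (6, -2), (5, 1)]. monom c k) = (Lq ^ 11 - Npoly * Lq ^ 3 + Npoly * Lq ^ 4) - (Lq ^ 11 - Npoly * Lq ^ 3)"
    unfolding Npoly_def by (simp add: monom_Lq; algebra)
  show "K0_eq (gen 12 (MW 1)) (Lpoly [(11, 1), (8, -1), (7, -3), (6, 2), (5, 2), (4, -1)])"
    unfolding Lpoly_Lf p1 by (rule MW1)
  show "K0_eq (gen 12 (MW 0)) (Lpoly [(11, 1), (9, 1), (8, 2), (7, -5), (5, 3), (4, -1)])"
    unfolding Lpoly_Lf p2 by (rule MW0)
  show "K0_eq (\<lambda>v. gen 12 (MW 0) v - gen 12 (MW 1) v) (Lpoly [(9, 1), (8, 3), (7, -2), (6, -2), (5, 1)])"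
    unfolding Lpoly_Lf p3 by (rule K0_diff[OF MW0 MW1, folded Lf_diff])
qed


end
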